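(* Let $W$ be a real symmetric non-negative $n\times n$ matrix with zero diagonal and $\beta\ge0$. If $I+\beta W$ is positive definite, then for every $z\in\mathbb{C}^n$ the function $x\mapsto D_{\beta,W}(x;z)$ has a unique minimizer over $\mathbb{C}^n$.
   Context: For $x\in\mathbb{C}^n$, $|x|$ denotes the vector of magnitudes, $\|x\|_1=\sum_i|x_i|$, $P_W(x)=\|x\|_1+\frac12\sum_{i,j}w_{i,j}|x_ix_j|=\|x\|_1+\frac12|x|^TW|x|$, and $D_{\beta,W}(x;z)=\frac12\|z-x\|_2^2+\beta P_W(x)$. *)

theory Defs
  imports "HOL-Analysis.Analysis"
begin

definition absvec :: "complex ^ 'n \<Rightarrow> real ^ 'n" where
  "absvec x = (\<chi> i. cmod (x $ i))"

definition norm1 :: "complex ^ 'n::finite \<Rightarrow> real" where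
  "norm1 x = (\<Sum>i\<in>UNIV. cmod (x $ i))"

definition P_W :: "real ^ 'n ^ 'n \<Rightarrow> complex ^ 'n::finite \<Rightarrow> real" where
  "P_W W x = norm1 x + (1/2) * (\<Sum>i\<in>UNIV. \<Sum>j\<in>UNIV. W $ i $ j * cmod (x $ i * x $ j))"

definition D_fun :: "real \<Rightarrow> real ^ 'n ^ 'n \<Rightarrow> complex ^ 'n::finite \<Rightarrow> complex ^ 'n \<Rightarrow> real" where
  "D_fun \<beta> W x z = (1/2) * (norm (z - x))\<^sup>2 + \<beta> * P_W W x"

definition pos_def :: "real ^ 'n ^ 'n::finite \<Rightarrow> bool" where
  "pos_def A \<longleftrightarrow> (\<forall>v::real ^ 'n. v \<noteq> 0 \<longrightarrow> v \<bullet> (A *v v) > 0)"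

end

theory Submission
  imports Defs
begin

lemma row: "(\<Sum>j\<in>UNIV. (mat 1 + b *\<^sub>R W) $ i $ j * v j) = v i + b * (\<Sum>j\<in>UNIV. W$i$j * v j)"
proof -
  have "(\<Sum>j\<in>UNIV. (mat 1 + b *\<^sub>R W) $ i $ j * v j) = (\<Sum>j\<in>UNIV. (if i = j then v j else 0) + b * (W$i$j * v j))"
    by (rule sum.cong) (auto simp: mat_def algebra_simps)
  then show ?thesis by (simp add: sum.distrib sum_distrib_left)
qed
lemma quad: "(\<chi> i. v i) \<bullet> ((mat 1 + b *\<^sub>R W) *v (\<chi> i. v i)) = (\<Sum>i\<in>UNIV. (v i)^2) + b * (\<Sum>i\<in>UNIV. \<Sum>j\<in>UNIV. W$i$j * (v i * v j))"
proof -
  have "(\<chi> i. v i) \<bullet> ((mat 1 + b *\<^sub>R W) *v (\<chi> i. v i)) = (\<Sum>i\<in>UNIV. v i * (v i + b * (\<Sum>j\<in>UNIV. W$i$j * v j)))"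
    unfolding inner_vec_def matrix_vector_mult_def by (simp only: vec_lambda_beta row inner_real_def)
  also have "\<dots> = (\<Sum>i\<in>UNIV. (v i)^2) + b * (\<Sum>i\<in>UNIV. \<Sum>j\<in>UNIV. W$i$j * (v i * v j))"
    by (simp add: distrib_left sum.distrib sum_distrib_left power2_eq_square mult_ac)
  finally show ?thesis .
qed

lemma cm: "cmod (a - b)^2 = cmod a ^2 - 2 * Re (cnj a * b) + cmod b ^2"
  by (simp add: cmod_power2 power2_diff algebra_simps)

lemma normsq: "(norm (v::complex^'n::finite))^2 = (\<Sum>i\<in>UNIV. cmod (v$i)^2)"
  by (simp add: norm_vec_def L2_set_def sum_nonneg)

definition G :: "real \<Rightarrow> real^'n^'n \<Rightarrow> complex^'n \<Rightarrow> ('n::finite \<Rightarrow> real) \<Rightarrow> real" where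
  "G b W z r = 1/2*(\<Sum>i\<in>UNIV. cmod(z$i)^2) - (\<Sum>i\<in>UNIV. cmod(z$i) * r i) + 1/2*(\<Sum>i\<in>UNIV. (r i)^2)
     + b*((\<Sum>i\<in>UNIV. r i) + 1/2*(\<Sum>i\<in>UNIV. \<Sum>j\<in>UNIV. W$i$j * (r i * r j)))"

lemma expand: "D_fun b W x z = 1/2*(\<Sum>i\<in>UNIV. cmod(z$i)^2) - (\<Sum>i\<in>UNIV. Re(cnj(z$i)*x$i)) + 1/2*(\<Sum>i\<in>UNIV. cmod(x$i)^2)
     + b*((\<Sum>i\<in>UNIV. cmod(x$i)) + 1/2*(\<Sum>i\<in>UNIV. \<Sum>j\<in>UNIV. W$i$j * (cmod(x$i) * cmod(x$j))))"
proof -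
  have "(norm (z - x))^2 = (\<Sum>i\<in>UNIV. cmod(z$i)^2 - 2 * Re(cnj(z$i)*x$i) + cmod(x$i)^2)"
    by (simp add: normsq cm)
  also have "\<dots> = (\<Sum>i\<in>UNIV. cmod(z$i)^2) - 2 * (\<Sum>i\<in>UNIV. Re(cnj(z$i)*x$i)) + (\<Sum>i\<in>UNIV. cmod(x$i)^2)"
    by (simp add: sum.distrib sum_subtractf sum_distrib_left)
  finally show ?thesis
    unfolding D_fun_def P_W_def norm1_def by (simp add: norm_mult algebra_simps)
qed

lemma D_ge_G: "D_fun b W x z = G b W z (\<lambda>i. cmod (x$i)) + (\<Sum>i\<in>UNIV. cmod(z$i) * cmod(x$i) - Re(cnj(z$i)*x$i))"
  unfolding expand G_def by (simp add: sum_subtractf)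

lemma E_nonneg: "cmod(z$i) * cmod(x$i) - Re(cnj(z$i)*x$i) \<ge> 0"
proof -
  have "Re(cnj(z$i)*x$i) \<le> cmod (cnj(z$i)*x$i)" by (rule complex_Re_le_cmod)
  then show ?thesis by (simp add: norm_mult)
qed

definition lift :: "complex^'n \<Rightarrow> ('n::finite \<Rightarrow> real) \<Rightarrow> complex^'n" where
  "lift z r = (\<chi> i. of_real (r i) * (if z$i = 0 then 1 else z$i / of_real (cmod (z$i))))"

lemma lift_cmod: "r i \<ge> 0 \<Longrightarrow> cmod (lift z r $ i) = r i"
  by (simp add: lift_def norm_mult norm_divide)

lemma lift_Re: "r i \<ge> 0 \<Longrightarrow> Re (cnj (z$i) * lift z r $ i) = cmod (z$i) * r i"
proof (cases "z$i = 0")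
  case False
  have "cnj (z$i) * lift z r $ i = of_real (r i) * (cnj (z$i) * z$i) / of_real (cmod (z$i))"
    using False by (simp add: lift_def)
  also have "\<dots> = of_real (r i) * of_real (cmod (z$i)^2) / of_real (cmod (z$i))"
    using complex_norm_square[of "z$i"] by (metis mult.commute)
  also have "\<dots> = of_real (r i * cmod (z$i)^2 / cmod (z$i))"
    by simp
  also have "\<dots> = of_real (r i * cmod (z$i))"
    using False by (simp add: power2_eq_square)
  finally show ?thesis by (simp add: mult.commute)
qed (simp add: lift_def)

lemma D_lift: "\<forall>i. r i \<ge> 0 \<Longrightarrow> D_fun b W (lift z r) z = G b W z r"
proof -
  assume h: "\<forall>i. r i \<ge> 0"
  have a: "(\<lambda>i. cmod (lift z r $ i)) = r" using h by (simp add: lift_cmod fun_eq_iff)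
  have "(\<Sum>i\<in>UNIV. cmod(z$i) * cmod(lift z r$i) - Re(cnj(z$i)*lift z r$i)) = 0"
  proof (rule sum.neutral, rule ballI)
    fix i
    have "r i \<ge> 0" using h by simp
    then show "cmod(z$i) * cmod(lift z r$i) - Re(cnj(z$i)*lift z r$i) = 0"
      by (simp only: lift_cmod lift_Re diff_self)
  qed
  then show ?thesis unfolding D_ge_G a by simp
qed

definition Q :: "real \<Rightarrow> real^'n^'n \<Rightarrow> ('n::finite \<Rightarrow> real) \<Rightarrow> real" where
  "Q b W v = (\<Sum>i\<in>UNIV. (v i)^2) + b * (\<Sum>i\<in>UNIV. \<Sum>j\<in>UNIV. W$i$j * (v i * v j))"

lemma G_Q: "G b W z r = 1/2*(\<Sum>i\<in>UNIV. cmod(z$i)^2) - ((\<Sum>i\<in>UNIV. cmod(z$i) * r i) - b * (\<Sum>i\<in>UNIV. r i)) + 1/2 * Q b W r"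
  unfolding G_def Q_def by (simp add: algebra_simps)

lemma Q_mid: "Q b W (\<lambda>i. (r i + s i)/2) = (Q b W r + Q b W s)/2 - Q b W (\<lambda>i. r i - s i)/4"
proof -
  have e1: "(\<Sum>i\<in>UNIV. ((r i + s i)/2)^2) = ((\<Sum>i\<in>UNIV. (r i)^2) + (\<Sum>i\<in>UNIV. (s i)^2))/2 - (\<Sum>i\<in>UNIV. (r i - s i)^2)/4"
    by (simp add: sum.distrib sum_subtractf sum_divide_distrib[symmetric] power2_eq_square algebra_simps) (simp add: field_simps)
  have t: "W$i$j * (((r i + s i)/2) * ((r j + s j)/2)) = (W$i$j * (r i * r j) + W$i$j * (s i * s j))/2 - W$i$j * ((r i - s i) * (r j - s j))/4" for i j
    by (simp add: field_simps)
  have e2: "(\<Sum>i\<in>UNIV. \<Sum>j\<in>UNIV. W$i$j * (((r i + s i)/2) * ((r j + s j)/2))) =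
     ((\<Sum>i\<in>UNIV. \<Sum>j\<in>UNIV. W$i$j * (r i * r j)) + (\<Sum>i\<in>UNIV. \<Sum>j\<in>UNIV. W$i$j * (s i * s j)))/2
       - (\<Sum>i\<in>UNIV. \<Sum>j\<in>UNIV. W$i$j * ((r i - s i) * (r j - s j)))/4"
    unfolding t by (simp add: sum.distrib sum_subtractf sum_divide_distrib[symmetric])
  have aux: "(P1+P2)/2 - P3/4 + (b::real)*((A+B)/2 - C/4) = ((P1 + b*A) + (P2 + b*B))/2 - (P3 + b*C)/4" for P1 P2 P3 A B C
    by (simp add: field_simps)
  show ?thesis unfolding Q_def e1 e2 by (rule aux)
qed

definition Lin where "Lin b (z::complex^'n::finite) r = (\<Sum>i\<in>UNIV. cmod(z$i) * r i) - b * (\<Sum>i\<in>UNIV. r i)"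

lemma G_mid: "G b W z (\<lambda>i. (r i + s i)/2) = (G b W z r + G b W z s)/2 - Q b W (\<lambda>i. r i - s i)/8"
proof -
  have L: "Lin b z (\<lambda>i. (r i + s i)/2) = (Lin b z r + Lin b z s)/2"
    unfolding Lin_def by (simp add: sum.distrib sum_divide_distrib[symmetric] algebra_simps) (simp add: field_simps)
  have aux: "Lm = (Lr+Ls)/2 \<Longrightarrow> 1/2*K - Lm + 1/2*((Qr+Qs)/2 - Qd/4) = (1/2*K - Lr + 1/2*Qr + (1/2*K - Ls + 1/2*Qs))/2 - Qd/8" for Lm Lr Ls K Qr Qs Qd :: real
    by (simp add: field_simps)
  show ?thesis unfolding G_Q Q_mid Lin_def[symmetric] by (rule aux[OF L])
qed

lemma pdQ:
  assumes pd: "pos_def (mat 1 + b *\<^sub>R W)" and v: "v i \<noteq> 0"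
  shows "Q b W v > 0"
proof -
  have "(\<chi> i. v i) \<noteq> 0" using v by (metis vec_lambda_beta zero_index)
  then have "(\<chi> i. v i) \<bullet> ((mat 1 + b *\<^sub>R W) *v (\<chi> i. v i)) > 0" using pd by (simp add: pos_def_def)
  then show ?thesis by (simp add: quad Q_def)
qed


lemma P_nonneg: "\<forall>i j. W $ i $ j \<ge> 0 \<Longrightarrow> P_W W x \<ge> 0"
  unfolding P_W_def norm1_def by (intro add_nonneg_nonneg mult_nonneg_nonneg sum_nonneg) auto

lemma re_cmod: "Re w = cmod w \<Longrightarrow> w = complex_of_real (cmod w)"
proof -
  assume h: "Re w = cmod w"
  have "(cmod w)^2 = (Re w)^2 + (Im w)^2" by (rule cmod_power2)
  then have "Im w = 0" using h by simp
  then show ?thesis using h by (simp add: complex_eq_iff)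
qed

lemma drop:
  assumes nonneg: "\<forall>i j. W $ i $ j \<ge> 0" and b: "b \<ge> 0"
    and mx: "\<forall>y. D_fun b W x z \<le> D_fun b W y z" and zk: "z$k = 0"
  shows "x$k = 0"
proof -
  define x' where "x' = (\<chi> j. if j = k then 0 else x$j)"
  have c': "cmod (x'$j) = (if j = k then 0 else cmod (x$j))" for j by (simp add: x'_def)
  have le: "cmod (x'$j) \<le> cmod (x$j)" for j by (simp add: c')
  have R: "(\<Sum>i\<in>UNIV. Re(cnj(z$i)*x'$i)) = (\<Sum>i\<in>UNIV. Re(cnj(z$i)*x$i))"
    by (rule sum.cong) (auto simp: x'_def zk)
  have "(\<Sum>i\<in>UNIV. cmod(x$i)^2 - cmod(x'$i)^2) = (\<Sum>i\<in>UNIV. if i = k then cmod(x$k)^2 else 0)"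
    by (rule sum.cong) (auto simp: c')
  then have S: "(\<Sum>i\<in>UNIV. cmod(x'$i)^2) = (\<Sum>i\<in>UNIV. cmod(x$i)^2) - cmod(x$k)^2"
    by (simp add: sum_subtractf)
  have L: "(\<Sum>i\<in>UNIV. cmod(x'$i)) \<le> (\<Sum>i\<in>UNIV. cmod(x$i))" by (rule sum_mono) (rule le)
  have WW: "(\<Sum>i\<in>UNIV. \<Sum>j\<in>UNIV. W$i$j * (cmod(x'$i) * cmod(x'$j))) \<le> (\<Sum>i\<in>UNIV. \<Sum>j\<in>UNIV. W$i$j * (cmod(x$i) * cmod(x$j)))"
    by (intro sum_mono mult_left_mono mult_mono le) (auto simp: nonneg)
  have "b * ((\<Sum>i\<in>UNIV. cmod(x'$i)) + 1/2*(\<Sum>i\<in>UNIV. \<Sum>j\<in>UNIV. W$i$j * (cmod(x'$i) * cmod(x'$j))))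
     \<le> b * ((\<Sum>i\<in>UNIV. cmod(x$i)) + 1/2*(\<Sum>i\<in>UNIV. \<Sum>j\<in>UNIV. W$i$j * (cmod(x$i) * cmod(x$j))))"
    using L WW b by (intro mult_left_mono) auto
  moreover have "Y' \<le> Y \<Longrightarrow> K - Rr + 1/2*(S - c) + Y' \<le> K - Rr + 1/2*S + Y - 1/2*c" for Y' Y K Rr S c :: real
    by (simp add: field_simps)
  ultimately have "D_fun b W x' z \<le> D_fun b W x z - 1/2 * cmod(x$k)^2"
    unfolding expand R S by blast
  moreover have "D_fun b W x z \<le> D_fun b W x' z" using mx by simp
  ultimately have "cmod(x$k)^2 \<le> 0" by linarith
  then show ?thesis by simp
qed

theorem proposition3:
  fixes W :: "real ^ 'n ^ 'n" and \<beta> :: real and z :: "complex ^ 'n"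
  assumes sym: "transpose W = W"
    and nonneg: "\<forall>i j. W $ i $ j \<ge> 0"
    and diag: "\<forall>i. W $ i $ i = 0"
    and beta: "\<beta> \<ge> 0"
    and pd: "pos_def (mat 1 + \<beta> *\<^sub>R W)"
  shows "\<exists>!x. \<forall>y. D_fun \<beta> W x z \<le> D_fun \<beta> W y z"
proof -
  let ?f = "\<lambda>x. D_fun \<beta> W x z"
  define R where "R = 2 * norm z + 1"
  have cont: "continuous_on UNIV ?f"
    unfolding D_fun_def P_W_def norm1_def by (intro continuous_intros)
  have "R \<ge> 0" unfolding R_def by simp
  then obtain x0 where x0: "x0 \<in> cball 0 R" "\<forall>y\<in>cball 0 R. ?f x0 \<le> ?f y"
    using continuous_attains_inf[OF compact_cball, of 0 R ?f] continuous_on_subset[OF cont]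
    by (metis centre_in_cball empty_iff subset_UNIV)
  have f0: "?f 0 = 1/2 * (norm z)^2" by (simp add: D_fun_def P_W_def norm1_def)
  have ex: "\<forall>y. ?f x0 \<le> ?f y"
  proof
    fix y
    show "?f x0 \<le> ?f y"
    proof (cases "y \<in> cball 0 R")
      case True then show ?thesis using x0 by blast
    next
      case False
      then have ny: "norm y > R" by simp
      have "norm (z - y) \<ge> norm y - norm z" by (metis norm_minus_commute norm_triangle_ineq2)
      then have "norm (z - y) > norm z" using ny unfolding R_def by simp
      then have "(norm z)^2 \<le> (norm (z - y))^2" by (intro power_mono) auto
      moreover have "\<beta> * P_W W y \<ge> 0" using beta P_nonneg[OF nonneg] by simp
      ultimately have "?f y \<ge> 1/2*(norm z)^2" unfolding D_fun_def by linarith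
      then have "?f 0 \<le> ?f y" using f0 by simp
      moreover have "?f x0 \<le> ?f 0" using x0 \<open>R \<ge> 0\<close> by simp
      ultimately show ?thesis by simp
    qed
  qed
  have uniq: "x = y" if mx: "\<forall>w. ?f x \<le> ?f w" and my: "\<forall>w. ?f y \<le> ?f w" for x y
  proof -
    have Dxy: "?f x = ?f y" using mx my by (meson order_antisym)
    define rx where "rx = (\<lambda>i. cmod (x$i))"
    define ry where "ry = (\<lambda>i. cmod (y$i))"
    have Ex: "G \<beta> W z rx = ?f x \<and> (\<Sum>i\<in>UNIV. cmod(z$i) * cmod(x$i) - Re(cnj(z$i)*x$i)) = 0"
      if m: "\<forall>w. ?f x \<le> ?f w" and r: "rx = (\<lambda>i. cmod (x$i))" for x rx
    proof -
      have e: "(\<Sum>i\<in>UNIV. cmod(z$i) * cmod(x$i) - Re(cnj(z$i)*x$i)) \<ge> 0"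
        by (rule sum_nonneg) (rule E_nonneg)
      have "G \<beta> W z rx = ?f (lift z rx)" by (rule D_lift[symmetric]) (simp add: r)
      then have "G \<beta> W z rx \<ge> ?f x" using m by simp
      then show ?thesis using D_ge_G[of \<beta> W x z] e r by simp
    qed
    have Gx: "G \<beta> W z rx = ?f x" and Ex0: "(\<Sum>i\<in>UNIV. cmod(z$i) * cmod(x$i) - Re(cnj(z$i)*x$i)) = 0"
      using Ex[OF mx rx_def] by auto
    have Gy: "G \<beta> W z ry = ?f y" and Ey0: "(\<Sum>i\<in>UNIV. cmod(z$i) * cmod(y$i) - Re(cnj(z$i)*y$i)) = 0"
      using Ex[OF my ry_def] by auto
    have "?f x \<le> ?f (lift z (\<lambda>i. (rx i + ry i)/2))" using mx by simp
    also have "\<dots> = G \<beta> W z (\<lambda>i. (rx i + ry i)/2)"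
      by (rule D_lift) (simp add: rx_def ry_def)
    also have "\<dots> = ?f x - Q \<beta> W (\<lambda>i. rx i - ry i)/8"
      unfolding G_mid Gx Gy Dxy by simp
    finally have Qle: "Q \<beta> W (\<lambda>i. rx i - ry i) \<le> 0" by simp
    have req: "cmod (x$i) = cmod (y$i)" for i
    proof (rule ccontr)
      assume "cmod (x$i) \<noteq> cmod (y$i)"
      then have "(\<lambda>i. rx i - ry i) i \<noteq> 0" by (simp add: rx_def ry_def)
      from pdQ[where v="\<lambda>i. rx i - ry i" and i=i, OF pd this] Qle show False by simp
    qed
    have ex0: "cmod(z$i) * cmod(x$i) - Re(cnj(z$i)*x$i) = 0" for i
      using Ex0 sum_nonneg_eq_0_iff[of UNIV "\<lambda>i. cmod(z$i) * cmod(x$i) - Re(cnj(z$i)*x$i)"] E_nonneg by auto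
    have ey0: "cmod(z$i) * cmod(y$i) - Re(cnj(z$i)*y$i) = 0" for i
      using Ey0 sum_nonneg_eq_0_iff[of UNIV "\<lambda>i. cmod(z$i) * cmod(y$i) - Re(cnj(z$i)*y$i)"] E_nonneg by auto
    have "x$i = y$i" for i
    proof (cases "z$i = 0")
      case True
      then show ?thesis using drop[OF nonneg beta mx True] drop[OF nonneg beta my True] by simp
    next
      case False
      have "Re (cnj(z$i)*x$i) = cmod (cnj(z$i)*x$i)" using ex0[of i] by (simp add: norm_mult)
      then have a: "cnj(z$i)*x$i = complex_of_real (cmod(z$i) * cmod(x$i))" by (metis re_cmod norm_mult complex_mod_cnj)
      have "Re (cnj(z$i)*y$i) = cmod (cnj(z$i)*y$i)" using ey0[of i] by (simp add: norm_mult)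
      then have b: "cnj(z$i)*y$i = complex_of_real (cmod(z$i) * cmod(y$i))" by (metis re_cmod norm_mult complex_mod_cnj)
      have "cnj(z$i)*x$i = cnj(z$i)*y$i" using a b req[of i] by simp
      then show ?thesis using False by simp
    qed
    then show ?thesis by (simp add: vec_eq_iff)
  qed
  show ?thesis using ex uniq by blast
qed

end
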